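(* Let $p$ be an odd prime and $\sim$ a nontrivial equivalence relation on $\mathbb{Z}_p^\times$ such that $x \sim y$ and $x \neq y$ imply $(y-x) \sim (-x)$. Let $S$ be the union of some equivalence class with $\{0\}$. If $x,y$ and $z,w$ are two pairs of distinct elements of $S$ (i.e. $x \neq y$, $z\neq w$) with $x - y = z - w$, then $x = z$ and $y = w$. In other words, $S$ is a modular Golomb ruler.
   Context: A subset $S \subseteq \mathbb{Z}_p$ is a modular Golomb ruler if $0 \in S$ and for any $x\neq y$ and $z \neq w$ in $S$ with $x-y=z-w$ we have $x=z$ and $y=w$. An equivalence relation is nontrivial if it has at least two classes. *)

theory Defs
  imports "HOL-Number_Theory.Number_Theory"
begin

text \<open>Z_p is represented by the residues {0..<p} (as integers), Z_p^* by {1..<p}.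
  Arithmetic is taken mod p.\<close>

definition modular_golomb_ruler :: "int \<Rightarrow> int set \<Rightarrow> bool" where
  "modular_golomb_ruler p S \<longleftrightarrow> S \<subseteq> {0..<p} \<and> 0 \<in> S \<and>
     (\<forall>x\<in>S. \<forall>y\<in>S. \<forall>z\<in>S. \<forall>w\<in>S.
        x \<noteq> y \<and> z \<noteq> w \<and> (x - y) mod p = (z - w) mod p \<longrightarrow> x = z \<and> y = w)"

end

theory Submission
  imports Defs
begin

theorem corollary3p21:
  fixes p :: int and R :: "(int \<times> int) set" and C :: "int set"
  assumes "prime p" and "odd p"
    and "equiv {1..<p} R"
    and "card ({1..<p} // R) \<ge> 2"
    and "\<And>x y. (x, y) \<in> R \<Longrightarrow> x \<noteq> y \<Longrightarrow> ((y - x) mod p, (- x) mod p) \<in> R"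
    and "C \<in> {1..<p} // R"
  shows "modular_golomb_ruler p (C \<union> {0})"
proof -
  have eq: "equiv {1..<p} R" by fact
  from assms(6) obtain a where a: "a \<in> {1..<p}" and Ca: "C = R``{a}" by (auto elim: quotientE)
  have Rsub: "R \<subseteq> {1..<p} \<times> {1..<p}" using eq by (auto simp: equiv_def refl_on_def)
  have Csub: "C \<subseteq> {1..<p}" using Rsub Ca by auto
  have symR: "sym R" and transR: "trans R" using eq by (auto simp: equiv_def)
  have inC: "v \<in> C" if "(u,v) \<in> R" "u \<in> C" for u v
    using that Ca transR by (auto dest: transD)
  have RC: "(u,v) \<in> R" if "u \<in> C" "v \<in> C" for u v
    using that Ca transR symR by (auto dest: transD symD)
  have "p \<noteq> 2" using assms(2) by auto
  then have p2: "p \<ge> 3" using prime_ge_2_int[OF assms(1)] by linarith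
  have K: "(y - x) mod p \<in> C \<longleftrightarrow> (- x) mod p \<in> C" if "x \<in> C" "y \<in> C" "x \<noteq> y" for x y
  proof -
    have "((y - x) mod p, (- x) mod p) \<in> R" using assms(5)[OF RC[OF that(1,2)] that(3)] .
    then show ?thesis using inC symR by (auto dest: symD)
  qed
  have N: "(- c) mod p \<notin> C" if c: "c \<in> C" for c
  proof
    assume nc: "(- c) mod p \<in> C"
    have c1: "1 \<le> c" "c < p" using c Csub by auto
    have step: "(int k * c) mod p \<in> C" if "1 \<le> k" "int k \<le> p - 1" for k :: nat
      using that
    proof (induction k)
      case 0 then show ?case by simp
    next
      case (Suc k)
      show ?case
      proof (cases "k = 0")
        case True then show ?thesis using c c1 by auto
      next
        case False
        then have IH: "(int k * c) mod p \<in> C" using Suc by auto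
        have ne: "(- c) mod p \<noteq> (int k * c) mod p"
        proof
          assume "(- c) mod p = (int k * c) mod p"
          then have "p dvd (int k * c - (- c))" by (metis mod_eq_dvd_iff)
          then have "p dvd int (Suc k) * c" by (simp add: algebra_simps)
          then have "p dvd int (Suc k) \<or> p dvd c" using prime_dvd_mult_iff[OF assms(1)] by blast
          then show False using Suc.prems c1 zdvd_not_zless[of "int (Suc k)" p] zdvd_not_zless[of c p]
            by auto
        qed
        have e1: "((int k * c) mod p - (- c) mod p) mod p = (int (Suc k) * c) mod p"
          by (simp add: mod_diff_eq algebra_simps)
        have e2: "(- ((- c) mod p)) mod p = c"
          using c1 by (simp add: mod_minus_eq)
        show ?thesis using K[OF nc IH ne] e1 e2 c by simp
      qed
    qed
    have cop: "coprime c p"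
      using prime_imp_coprime[OF assms(1), of c] c1 zdvd_not_zless[of c p]
      by (auto simp: coprime_commute)
    obtain u where u: "[c * u = 1] (mod p)" using cong_solve_coprime_int[OF cop] by blast
    have all: "{1..<p} \<subseteq> C"
    proof
      fix y assume y: "y \<in> {1..<p}"
      define k where "k = (u * y) mod p"
      have k0: "k \<ge> 0" "k < p" using p2 by (auto simp: k_def)
      have kne: "k \<noteq> 0"
      proof
        assume "k = 0"
        then have "p dvd u * y" by (simp add: k_def dvd_eq_mod_eq_0)
        then have "p dvd u \<or> p dvd y" using prime_dvd_mult_iff[OF assms(1)] by blast
        moreover have "\<not> p dvd y" using y zdvd_not_zless[of y p] by auto
        moreover have "\<not> p dvd u"
        proof
          assume "p dvd u"
          then have "p dvd c * u" by simp
          then have "[c * u = 0] (mod p)" by (simp add: cong_0_iff)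
          then have "[1 = 0] (mod p)" using u by (meson cong_sym cong_trans)
          then show False using p2 by (simp add: cong_def)
        qed
        ultimately show False by blast
      qed
      have "(k * c) mod p = ((c * u) * y) mod p"
        by (simp add: k_def mod_mult_right_eq mult.assoc mult.commute mult.left_commute)
      also have "\<dots> = (1 * y) mod p"
        using cong_scalar_right[OF u, of y] by (simp add: cong_def)
      also have "\<dots> = y" using y by simp
      finally have yk: "(k * c) mod p = y" .
      have "(int (nat k) * c) mod p \<in> C" using step[of "nat k"] k0 kne by auto
      then show "y \<in> C" using yk k0 by simp
    qed
    have QC: "{1..<p} // R \<subseteq> {C}"
    proof
      fix X assume "X \<in> {1..<p} // R"
      then obtain b where b: "b \<in> {1..<p}" "X = R``{b}" by (auto elim: quotientE)
      have "(a, b) \<in> R" using RC a b all by blast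
      then have "R``{a} = R``{b}" using equiv_class_eq[OF eq] by blast
      then show "X \<in> {C}" using b Ca by simp
    qed
    have "card ({1..<p} // R) \<le> 1"
      using card_mono[OF _ QC] by simp
    then show False using assms(4) by simp
  qed
  have SF: "(a' + b) mod p \<notin> C" if "a' \<in> C" "b \<in> C" for a' b
  proof
    assume ab: "(a' + b) mod p \<in> C"
    have r: "1 \<le> a'" "a' < p" "1 \<le> b" "b < p" using that Csub by auto
    have ne: "b \<noteq> (a' + b) mod p"
    proof
      assume "b = (a' + b) mod p"
      then have "b mod p = (a' + b) mod p" using r by simp
      then have "p dvd a'" by (simp add: mod_eq_dvd_iff)
      then show False using r zdvd_not_zless[of a' p] by auto
    qed
    have "((a' + b) mod p - b) mod p = a'" using r by (simp add: mod_diff_left_eq)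
    then show False using K[OF that(2) ab ne] that N[OF that(2)] by simp
  qed
  show ?thesis
    unfolding modular_golomb_ruler_def
  proof (intro conjI)
    show "C \<union> {0} \<subseteq> {0..<p}" using Csub p2 by auto
    show "0 \<in> C \<union> {0}" by simp
  next
    show "\<forall>x\<in>C \<union> {0}. \<forall>y\<in>C \<union> {0}. \<forall>z\<in>C \<union> {0}. \<forall>w\<in>C \<union> {0}.
        x \<noteq> y \<and> z \<noteq> w \<and> (x - y) mod p = (z - w) mod p \<longrightarrow> x = z \<and> y = w"
  proof (intro ballI impI)
    fix x y z w assume xs: "x \<in> C \<union> {0}" and ys: "y \<in> C \<union> {0}" and zs: "z \<in> C \<union> {0}"
      and ws: "w \<in> C \<union> {0}" and H: "x \<noteq> y \<and> z \<noteq> w \<and> (x - y) mod p = (z - w) mod p"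
    have D: "p dvd (x - y - (z - w))" using H by (simp add: mod_eq_dvd_iff)
    have r: "\<And>u. u \<in> C \<union> {0} \<Longrightarrow> 0 \<le> u \<and> u < p" using Csub p2 by auto
    have modeq: "u = t mod p" if "0 \<le> u" "u < p" "p dvd (u - t)" for u t
      using that by (metis mod_eq_dvd_iff mod_pos_pos_trivial)
    have dvp1: "p dvd e" if "e = x - y - (z - w)" for e
      using that D by simp
    have dvp2: "p dvd e" if "e = - (x - y - (z - w))" for e
      using that D by (simp only: dvd_minus_iff)
    show "x = z \<and> y = w"
    proof (cases "x = 0")
      case x0: True
      then have yC: "y \<in> C" using ys H by auto
      show ?thesis
      proof (cases "z = 0")
        case True
        then have "w \<in> C" using ws H by auto
        have "p dvd (w - y)" by (rule dvp1) (insert x0 True, simp add: algebra_simps)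
        then have "w = y mod p" using modeq r ws by blast
        then show ?thesis using x0 True r ys by simp
      next
        case False
        then have zC: "z \<in> C" using zs by auto
        show ?thesis
        proof (cases "w = 0")
          case True
          have "p dvd (z - (-y))" by (rule dvp2) (insert x0 True, simp add: algebra_simps)
          then have "z = (-y) mod p" using modeq r zs by blast
          then show ?thesis using N[OF yC] zC by simp
        next
          case False
          then have wC: "w \<in> C" using ws by auto
          have "p dvd (w - (z + y))" by (rule dvp1) (insert x0, simp add: algebra_simps)
          then have "w = (z + y) mod p" using modeq r ws by blast
          then show ?thesis using SF[OF zC yC] wC by simp
        qed
      qed
    next
      case False
      then have xC: "x \<in> C" using xs by auto
      show ?thesis
      proof (cases "y = 0")
        case y0: True
        show ?thesis
        proof (cases "z = 0")
          case True
          then have wC: "w \<in> C" using ws H by auto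
          have "p dvd (x - (-w))" by (rule dvp1) (insert y0 True, simp add: algebra_simps)
          then have "x = (-w) mod p" using modeq r xs by blast
          then show ?thesis using N[OF wC] xC by simp
        next
          case False
          then have zC: "z \<in> C" using zs by auto
          show ?thesis
          proof (cases "w = 0")
            case True
            have "p dvd (x - z)" using D y0 True by simp
            then have "x = z mod p" using modeq r xs by blast
            then show ?thesis using y0 True r zs by simp
          next
            case False
            then have wC: "w \<in> C" using ws by auto
            have "p dvd (z - (x + w))" by (rule dvp2) (insert y0, simp add: algebra_simps)
            then have "z = (x + w) mod p" using modeq r zs by blast
            then show ?thesis using SF[OF xC wC] zC by simp
          qed
        qed
      next
        case False
        then have yC: "y \<in> C" using ys by auto
        show ?thesis
        proof (cases "z = 0")
          case True
          then have wC: "w \<in> C" using ws H by auto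
          have "p dvd (y - (x + w))" by (rule dvp2) (insert True, simp add: algebra_simps)
          then have "y = (x + w) mod p" using modeq r ys by blast
          then show ?thesis using SF[OF xC wC] yC by simp
        next
          case False
          then have zC: "z \<in> C" using zs by auto
          show ?thesis
          proof (cases "w = 0")
            case True
            have "p dvd (x - (z + y))" using D True by (simp add: algebra_simps)
            then have "x = (z + y) mod p" using modeq r xs by blast
            then show ?thesis using SF[OF zC yC] xC by simp
          next
            case False
            then have wC: "w \<in> C" using ws by auto
            show ?thesis
            proof (cases "x = z")
              case True
              have "p dvd (y - w)" by (rule dvp2) (insert True, simp add: algebra_simps)
              then have "y = w mod p" using modeq r ys by blast
              then show ?thesis using True r ws by simp
            next
              case xz: False
              have R1: "((y - x) mod p, (- x) mod p) \<in> R"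
                using assms(5)[OF RC[OF xC yC]] H by simp
              have R2: "((w - z) mod p, (- z) mod p) \<in> R"
                using assms(5)[OF RC[OF zC wC]] H by simp
              have "p dvd ((y - x) - (w - z))" by (rule dvp2) (simp add: algebra_simps)
              then have "(y - x) mod p = (w - z) mod p" by (simp add: mod_eq_dvd_iff)
              then have "((- x) mod p, (w - z) mod p) \<in> R" using symD[OF symR R1] by simp
              then have R3: "((- x) mod p, (- z) mod p) \<in> R" using transD[OF transR _ R2] by blast
              have gen: "(u - v) mod p \<in> C" if uC: "u \<in> C" and vC: "v \<in> C" and uv: "u \<noteq> v"
                and Ruv: "((- u) mod p, (- v) mod p) \<in> R" for u v
              proof -
                have ne: "(- u) mod p \<noteq> (- v) mod p"
                proof
                  assume "(- u) mod p = (- v) mod p"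
                  then have "p dvd (v - u)" by (simp add: mod_eq_dvd_iff)
                  then have "p dvd (u - v)" by (metis dvd_minus_iff minus_diff_eq)
                  then have "u = v mod p" using modeq Csub uC by force
                  then show False using uv Csub vC by force
                qed
                have "((((- v) mod p) - ((- u) mod p)) mod p, (- ((- u) mod p)) mod p) \<in> R"
                  using assms(5)[OF Ruv ne] .
                moreover have "(- ((- u) mod p)) mod p = u"
                  using uC Csub by (force simp: mod_minus_eq)
                moreover have "(((- v) mod p) - ((- u) mod p)) mod p = (u - v) mod p"
                  by (simp add: mod_diff_eq)
                ultimately have Ruv2: "((u - v) mod p, u) \<in> R" by simp
                show ?thesis using inC[OF symD[OF symR Ruv2] uC] .
              qed
              have c1: "(x - z) mod p \<in> C" using gen[OF xC zC xz R3] .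
              have c2: "(z - x) mod p \<in> C" using gen[OF zC xC _ symD[OF symR R3]] xz by auto
              have "(- ((x - z) mod p)) mod p = (z - x) mod p" by (simp add: mod_minus_eq)
              then show ?thesis using N[OF c1] c2 by simp
            qed
          qed
        qed
      qed
    qed
  qed
  qed
qed

end
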